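(* Let $A$ be a unital alternative $*$-algebra over $\mathbb{C}$ with unit $1_A$. Assume that $A$ contains a nontrivial symmetric idempotent $e$ (i.e. $e^2=e=e^*$, $e\neq 0$, $e\neq 1_A$) such that (i) if $x\in A$ and $(xa)e=0$ for all $a\in A$, then $x=0$; and (ii) if $x\in A$ and $(xa)(1_A-e)=0$ for all $a\in A$, then $x=0$. Then a map $\Phi:A\to A$ is a nonlinear $*$-Jordan-type derivation if and only if $\Phi$ is an additive $*$-derivation.
   Context: An algebra $A$ (not necessarily associative) is alternative if $a^2b=a(ab)$ and $ba^2=(ba)a$ for all $a,b\in A$. An involution on $A$ is a map $*:A\to A$ with $(x+y)^*=x^*+y^*$, $(x^* )^*=x$, $(xy)^*=y^*x^*$. For $a,b\in A$ let $a\bullet b=ab+ba^*$, with left-normed iteration $a_1\bullet\cdots\bullet a_n=(\cdots((a_1\bullet a_2)\bullet a_3)\cdots)\bullet a_n$. For a fixed integer $n\ge2$, a (not necessarily additive) map $\Phi:A\to A$ is a nonlinear $*$-Jordan $n$-derivation if $\Phi(a_1\bullet\cdots\bullet a_n)=\sum_{k=1}^n a_1\bullet\cdots\bullet a_{k-1}\bullet\Phi(a_k)\bullet a_{k+1}\bullet\cdots\bullet a_n$ for all $a_1,\dots,a_n\in A$; a nonlinear $*$-Jordan-type derivation is a map that is a nonlinear $*$-Jordan $n$-derivation for some $n\ge 2$. A map $\Phi$ is an additive $*$-derivation if it is additive, $\Phi(ab)=\Phi(a)b+a\Phi(b)$ and $\Phi(a^* )=\Phi(a)^*$ for all $a,b\in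 A$. *)

theory Defs
  imports Complex_Main
begin

definition complex_algebra :: "(complex \<Rightarrow> 'a::ab_group_add \<Rightarrow> 'a) \<Rightarrow> ('a \<Rightarrow> 'a \<Rightarrow> 'a) \<Rightarrow> bool" where
  "complex_algebra sc mul \<longleftrightarrow>
     module sc \<and>
     (\<forall>x y z. mul (x + y) z = mul x z + mul y z) \<and>
     (\<forall>x y z. mul x (y + z) = mul x y + mul x z) \<and>
     (\<forall>c x y. mul (sc c x) y = sc c (mul x y)) \<and>
     (\<forall>c x y. mul x (sc c y) = sc c (mul x y))"

definition alternative :: "('a \<Rightarrow> 'a \<Rightarrow> 'a) \<Rightarrow> bool" where
  "alternative mul \<longleftrightarrow>
     (\<forall>a b. mul (mul a a) b = mul a (mul a b)) \<and>
     (\<forall>a b. mul b (mul a a) = mul (mul b a) a)"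

definition involution :: "('a \<Rightarrow> 'a \<Rightarrow> 'a) \<Rightarrow> ('a::ab_group_add \<Rightarrow> 'a) \<Rightarrow> bool" where
  "involution mul st \<longleftrightarrow>
     (\<forall>x y. st (x + y) = st x + st y) \<and>
     (\<forall>x. st (st x) = x) \<and>
     (\<forall>x y. st (mul x y) = mul (st y) (st x))"

definition unital_alt_star_algebra ::
  "(complex \<Rightarrow> 'a::ab_group_add \<Rightarrow> 'a) \<Rightarrow> ('a \<Rightarrow> 'a \<Rightarrow> 'a) \<Rightarrow> ('a \<Rightarrow> 'a) \<Rightarrow> 'a \<Rightarrow> bool" where
  "unital_alt_star_algebra sc mul st one \<longleftrightarrow>
     complex_algebra sc mul \<and> alternative mul \<and> involution mul st \<and>
     (\<forall>c x. st (sc c x) = sc (cnj c) (st x)) \<and>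
     (\<forall>x. mul one x = x \<and> mul x one = x)"

definition jbullet :: "('a \<Rightarrow> 'a \<Rightarrow> 'a) \<Rightarrow> ('a::ab_group_add \<Rightarrow> 'a) \<Rightarrow> 'a \<Rightarrow> 'a \<Rightarrow> 'a" where
  "jbullet mul st a b = mul a b + mul b (st a)"

definition jprod :: "('a \<Rightarrow> 'a \<Rightarrow> 'a) \<Rightarrow> ('a::ab_group_add \<Rightarrow> 'a) \<Rightarrow> 'a list \<Rightarrow> 'a" where
  "jprod mul st as = foldl (jbullet mul st) (hd as) (tl as)"

definition star_jordan_n_derivation ::
  "('a \<Rightarrow> 'a \<Rightarrow> 'a) \<Rightarrow> ('a::ab_group_add \<Rightarrow> 'a) \<Rightarrow> nat \<Rightarrow> ('a \<Rightarrow> 'a) \<Rightarrow> bool" where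
  "star_jordan_n_derivation mul st n \<Phi> \<longleftrightarrow>
     (\<forall>as. length as = n \<longrightarrow>
        \<Phi> (jprod mul st as) = (\<Sum>k<n. jprod mul st (as[k := \<Phi> (as ! k)])))"

definition star_jordan_type_derivation ::
  "('a \<Rightarrow> 'a \<Rightarrow> 'a) \<Rightarrow> ('a::ab_group_add \<Rightarrow> 'a) \<Rightarrow> ('a \<Rightarrow> 'a) \<Rightarrow> bool" where
  "star_jordan_type_derivation mul st \<Phi> \<longleftrightarrow>
     (\<exists>n\<ge>2. star_jordan_n_derivation mul st n \<Phi>)"

definition additive_star_derivation ::
  "('a \<Rightarrow> 'a \<Rightarrow> 'a) \<Rightarrow> ('a::ab_group_add \<Rightarrow> 'a) \<Rightarrow> ('a \<Rightarrow> 'a) \<Rightarrow> bool" where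
  "additive_star_derivation mul st \<Phi> \<longleftrightarrow>
     (\<forall>x y. \<Phi> (x + y) = \<Phi> x + \<Phi> y) \<and>
     (\<forall>a b. \<Phi> (mul a b) = mul (\<Phi> a) b + mul a (\<Phi> b)) \<and>
     (\<forall>a. \<Phi> (st a) = st (\<Phi> a))"

end

theory Submission
  imports Defs
begin


locale AS =
  fixes sc :: "complex \<Rightarrow> 'a::ab_group_add \<Rightarrow> 'a"
    and mul :: "'a \<Rightarrow> 'a \<Rightarrow> 'a" (infixl "\<odot>" 70)
    and st :: "'a \<Rightarrow> 'a" and one :: 'a
  assumes AS: "unital_alt_star_algebra sc mul st one"
begin

lemma md: "module sc" using AS unfolding unital_alt_star_algebra_def complex_algebra_def by blast

lemma mul_addL: "(x + y) \<odot> z = x \<odot> z + y \<odot> z"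
  using AS unfolding unital_alt_star_algebra_def complex_algebra_def by blast
lemma mul_addR: "x \<odot> (y + z) = x \<odot> y + x \<odot> z"
  using AS unfolding unital_alt_star_algebra_def complex_algebra_def by blast
lemma mul_scL: "(sc c x) \<odot> y = sc c (x \<odot> y)"
  using AS unfolding unital_alt_star_algebra_def complex_algebra_def by blast
lemma mul_scR: "x \<odot> (sc c y) = sc c (x \<odot> y)"
  using AS unfolding unital_alt_star_algebra_def complex_algebra_def by blast
lemma left_alt: "(a \<odot> a) \<odot> b = a \<odot> (a \<odot> b)"
  using AS unfolding unital_alt_star_algebra_def alternative_def by blast
lemma right_alt: "b \<odot> (a \<odot> a) = (b \<odot> a) \<odot> a"
  using AS unfolding unital_alt_star_algebra_def alternative_def by blast
lemma st_add: "st (x + y) = st x + st y"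
  using AS unfolding unital_alt_star_algebra_def involution_def by blast
lemma st_st[simp]: "st (st x) = x"
  using AS unfolding unital_alt_star_algebra_def involution_def by blast
lemma st_mul: "st (x \<odot> y) = st y \<odot> st x"
  using AS unfolding unital_alt_star_algebra_def involution_def by blast
lemma st_sc: "st (sc c x) = sc (cnj c) (st x)"
  using AS unfolding unital_alt_star_algebra_def by blast
lemma one_mul[simp]: "one \<odot> x = x"
  using AS unfolding unital_alt_star_algebra_def by blast
lemma mul_one[simp]: "x \<odot> one = x"
  using AS unfolding unital_alt_star_algebra_def by blast

lemma mul_0L[simp]: "0 \<odot> x = 0"
proof -
  have "0 \<odot> x = 0 \<odot> x + 0 \<odot> x" using mul_addL[of 0 0 x] by (simp only: add_0)
  then show ?thesis by (metis add_cancel_right_right)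
qed
lemma mul_0R[simp]: "x \<odot> 0 = 0"
proof -
  have "x \<odot> 0 = x \<odot> 0 + x \<odot> 0" using mul_addR[of x 0 0] by (simp only: add_0)
  then show ?thesis by (metis add_cancel_right_right)
qed
lemma mul_negL: "(- x) \<odot> y = - (x \<odot> y)"
proof -
  have "x \<odot> y + (-x) \<odot> y = (x + -x) \<odot> y" by (rule mul_addL[symmetric])
  also have "\<dots> = 0" by simp
  finally
  show ?thesis by (metis add_eq_0_iff)
qed
lemma mul_negR: "x \<odot> (- y) = - (x \<odot> y)"
proof -
  have "x \<odot> y + x \<odot> (-y) = x \<odot> (y + -y)" by (rule mul_addR[symmetric])
  also have "\<dots> = 0" by simp
  finally
  show ?thesis by (metis add_eq_0_iff)
qed
lemma mul_diffL: "(x - y) \<odot> z = x \<odot> z - y \<odot> z"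
  unfolding diff_conv_add_uminus by (simp only: mul_addL mul_negL)
lemma mul_diffR: "x \<odot> (y - z) = x \<odot> y - x \<odot> z"
  unfolding diff_conv_add_uminus by (simp only: mul_addR mul_negR)
lemma st_0[simp]: "st 0 = 0"
proof -
  have "st 0 = st 0 + st 0" using st_add[of 0 0] by (simp only: add_0)
  then show ?thesis by (metis add_cancel_right_right)
qed
lemma st_neg: "st (- x) = - st x"
proof -
  have "st x + st (-x) = st (x + -x)" by (rule st_add[symmetric])
  also have "\<dots> = 0" by simp
  finally
  show ?thesis by (metis add_eq_0_iff)
qed
lemma st_diff: "st (x - y) = st x - st y"
  unfolding diff_conv_add_uminus by (simp only: st_add st_neg)

lemmas sc_simps = module.scale_right_distrib[OF md] module.scale_left_distrib[OF md]
  module.scale_scale[OF md] module.scale_one[OF md] module.scale_zero_left[OF md]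
  module.scale_zero_right[OF md] module.scale_minus_left[OF md] module.scale_minus_right[OF md]
  module.scale_right_diff_distrib[OF md] module.scale_left_diff_distrib[OF md]

lemmas R = mul_addL mul_addR mul_scL mul_scR mul_negL mul_negR mul_diffL mul_diffR
  st_add st_mul st_sc st_neg st_diff sc_simps

lemma st_one[simp]: "st one = one"
proof -
  have "st one \<odot> y = y" for y using st_mul[of "st y" one] by simp
  then have "st one \<odot> one = one" by blast
  then show ?thesis by simp
qed

lemma two_zero: fixes x :: 'a shows "x + x = 0 \<Longrightarrow> x = 0"
proof -
  assume h: "x + x = 0"
  have "x = sc (1/2 + 1/2) x" by (simp add: sc_simps)
  also have "\<dots> = sc (1/2) (x + x)"
    by (simp only: module.scale_left_distrib[OF md] module.scale_right_distrib[OF md])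
  finally show ?thesis using h by (simp add: sc_simps)
qed

lemma linL: "a \<odot> (c \<odot> b) + c \<odot> (a \<odot> b) = (a \<odot> c) \<odot> b + (c \<odot> a) \<odot> b"
proof -
  have "((a + c) \<odot> (a + c)) \<odot> b = (a + c) \<odot> ((a + c) \<odot> b)" by (rule left_alt)
  then show ?thesis using left_alt[of a b] left_alt[of c b]
    by (simp add: mul_addL mul_addR algebra_simps)
qed

lemma linR: "b \<odot> (a \<odot> c) + b \<odot> (c \<odot> a) = (b \<odot> a) \<odot> c + (b \<odot> c) \<odot> a"
proof -
  have "b \<odot> ((a + c) \<odot> (a + c)) = (b \<odot> (a + c)) \<odot> (a + c)" by (rule right_alt)
  then show ?thesis using right_alt[of b a] right_alt[of b c]
    by (simp add: mul_addL mul_addR algebra_simps)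
qed

lemma flex: "(a \<odot> b) \<odot> a = a \<odot> (b \<odot> a)"
  using linL[of a b a] right_alt[of b a] by (simp add: algebra_simps)

end


locale PE = AS +
  fixes e :: "'a::ab_group_add"
  assumes e_idem: "e \<odot> e = e" and e_sym: "st e = e"
begin

lemma ee_x[simp]: "e \<odot> (e \<odot> x) = e \<odot> x"
  using left_alt[of e x] e_idem by simp
lemma x_ee[simp]: "(x \<odot> e) \<odot> e = x \<odot> e"
  using right_alt[of x e] e_idem by simp
lemma exe[simp]: "e \<odot> (x \<odot> e) = (e \<odot> x) \<odot> e"
  using flex[of e x] by simp

definition p11 where "p11 x \<longleftrightarrow> e \<odot> x = x \<and> x \<odot> e = x"
definition p12 where "p12 x \<longleftrightarrow> e \<odot> x = x \<and> x \<odot> e = 0"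
definition p21 where "p21 x \<longleftrightarrow> e \<odot> x = 0 \<and> x \<odot> e = x"
definition p22 where "p22 x \<longleftrightarrow> e \<odot> x = 0 \<and> x \<odot> e = 0"

definition c11 where "c11 x = (e \<odot> x) \<odot> e"
definition c12 where "c12 x = e \<odot> x - (e \<odot> x) \<odot> e"
definition c21 where "c21 x = x \<odot> e - (e \<odot> x) \<odot> e"
definition c22 where "c22 x = x - e \<odot> x - x \<odot> e + (e \<odot> x) \<odot> e"

lemma decomp: "x = c11 x + c12 x + c21 x + c22 x"
  unfolding c11_def c12_def c21_def c22_def by (simp add: algebra_simps)

lemma e_exe[simp]: "e \<odot> ((e \<odot> x) \<odot> e) = (e \<odot> x) \<odot> e"
  by (metis exe ee_x)
lemma exe_e[simp]: "((e \<odot> x) \<odot> e) \<odot> e = (e \<odot> x) \<odot> e"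
  by simp

lemma p11_c11[simp]: "p11 (c11 x)" unfolding p11_def c11_def by simp
lemma p12_c12[simp]: "p12 (c12 x)" unfolding p12_def c12_def by (simp add: mul_diffL mul_diffR)
lemma p21_c21[simp]: "p21 (c21 x)" unfolding p21_def c21_def by (simp add: mul_diffL mul_diffR)
lemma p22_c22[simp]: "p22 (c22 x)" unfolding p22_def c22_def
  by (simp add: mul_diffL mul_diffR mul_addL mul_addR)

lemma c_p11[simp]: "p11 x \<Longrightarrow> c11 x = x" "p11 x \<Longrightarrow> c12 x = 0" "p11 x \<Longrightarrow> c21 x = 0" "p11 x \<Longrightarrow> c22 x = 0"
  unfolding p11_def c11_def c12_def c21_def c22_def by simp_all
lemma c_p12[simp]: "p12 x \<Longrightarrow> c11 x = 0" "p12 x \<Longrightarrow> c12 x = x" "p12 x \<Longrightarrow> c21 x = 0" "p12 x \<Longrightarrow> c22 x = 0"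
  unfolding p12_def c11_def c12_def c21_def c22_def by simp_all
lemma c_p21[simp]: "p21 x \<Longrightarrow> c11 x = 0" "p21 x \<Longrightarrow> c12 x = 0" "p21 x \<Longrightarrow> c21 x = x" "p21 x \<Longrightarrow> c22 x = 0"
  unfolding p21_def c11_def c12_def c21_def c22_def by (simp_all add: exe[symmetric] del: exe)
lemma c_p22[simp]: "p22 x \<Longrightarrow> c11 x = 0" "p22 x \<Longrightarrow> c12 x = 0" "p22 x \<Longrightarrow> c21 x = 0" "p22 x \<Longrightarrow> c22 x = x"
  unfolding p22_def c11_def c12_def c21_def c22_def by simp_all

lemma c_add[simp]: "c11 (x + y) = c11 x + c11 y" "c12 (x + y) = c12 x + c12 y"
  "c21 (x + y) = c21 x + c21 y" "c22 (x + y) = c22 x + c22 y"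
  unfolding c11_def c12_def c21_def c22_def by (simp_all add: mul_addL mul_addR algebra_simps)
lemma c_neg[simp]: "c11 (- x) = - c11 x" "c12 (- x) = - c12 x"
  "c21 (- x) = - c21 x" "c22 (- x) = - c22 x"
  unfolding c11_def c12_def c21_def c22_def by (simp_all add: mul_negL mul_negR algebra_simps)
lemma c_diff[simp]: "c11 (x - y) = c11 x - c11 y" "c12 (x - y) = c12 x - c12 y"
  "c21 (x - y) = c21 x - c21 y" "c22 (x - y) = c22 x - c22 y"
  unfolding c11_def c12_def c21_def c22_def by (simp_all add: mul_diffL mul_diffR algebra_simps)
lemma c_sc[simp]: "c11 (sc a x) = sc a (c11 x)" "c12 (sc a x) = sc a (c12 x)"
  "c21 (sc a x) = sc a (c21 x)" "c22 (sc a x) = sc a (c22 x)"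
  unfolding c11_def c12_def c21_def c22_def by (simp_all add: mul_scL mul_scR sc_simps)
lemma c_zero[simp]: "c11 0 = 0" "c12 0 = 0" "c21 0 = 0" "c22 0 = 0"
  unfolding c11_def c12_def c21_def c22_def by simp_all

lemma p_add: "p11 x \<Longrightarrow> p11 y \<Longrightarrow> p11 (x + y)" "p12 x \<Longrightarrow> p12 y \<Longrightarrow> p12 (x + y)"
  "p21 x \<Longrightarrow> p21 y \<Longrightarrow> p21 (x + y)" "p22 x \<Longrightarrow> p22 y \<Longrightarrow> p22 (x + y)"
  unfolding p11_def p12_def p21_def p22_def by (simp_all add: mul_addL mul_addR)
lemma p_neg: "p11 x \<Longrightarrow> p11 (- x)" "p12 x \<Longrightarrow> p12 (- x)"
  "p21 x \<Longrightarrow> p21 (- x)" "p22 x \<Longrightarrow> p22 (- x)"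
  unfolding p11_def p12_def p21_def p22_def by (simp_all add: mul_negL mul_negR)
lemma p_sc: "p11 x \<Longrightarrow> p11 (sc a x)" "p12 x \<Longrightarrow> p12 (sc a x)"
  "p21 x \<Longrightarrow> p21 (sc a x)" "p22 x \<Longrightarrow> p22 (sc a x)"
  unfolding p11_def p12_def p21_def p22_def by (simp_all add: mul_scL mul_scR sc_simps)
lemma p_zero[simp]: "p11 0" "p12 0" "p21 0" "p22 0"
  unfolding p11_def p12_def p21_def p22_def by simp_all

lemma p_st: "p11 x \<Longrightarrow> p11 (st x)" "p12 x \<Longrightarrow> p21 (st x)"
  "p21 x \<Longrightarrow> p12 (st x)" "p22 x \<Longrightarrow> p22 (st x)"
  unfolding p11_def p12_def p21_def p22_def
  by (metis st_mul e_sym st_0)+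

lemma p11_e[simp]: "p11 e" unfolding p11_def by (simp add: e_idem)
lemma p22_f[simp]: "p22 (one - e)" unfolding p22_def by (simp add: mul_diffL mul_diffR e_idem)

lemma eL: "e \<odot> (x \<odot> y) = (e \<odot> x) \<odot> y + (x \<odot> e) \<odot> y - x \<odot> (e \<odot> y)"
  using linL[of e x y] by (simp add: algebra_simps)
lemma eR: "(x \<odot> y) \<odot> e = x \<odot> (y \<odot> e) + x \<odot> (e \<odot> y) - (x \<odot> e) \<odot> y"
  using linR[of x y e] by (simp add: algebra_simps)

lemma zL2: "e \<odot> z = z + z \<Longrightarrow> z = 0"
proof -
  assume h: "e \<odot> z = z + z"
  have "e \<odot> (e \<odot> z) = e \<odot> z" by simp
  then have "(z + z) + (z + z) = z + z" using h by (simp add: mul_addR)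
  then have "z + z = 0" by (metis add_cancel_right_right)
  then show ?thesis by (rule two_zero)
qed
lemma zLm: "e \<odot> z = - z \<Longrightarrow> z = 0"
proof -
  assume h: "e \<odot> z = - z"
  have "e \<odot> (e \<odot> z) = e \<odot> z" by simp
  then have "z = - z" using h by (simp add: mul_negR)
  then have "z + z = 0" by (metis add.right_inverse)
  then show ?thesis by (rule two_zero)
qed
lemma zR2: "z \<odot> e = z + z \<Longrightarrow> z = 0"
proof -
  assume h: "z \<odot> e = z + z"
  have "(z \<odot> e) \<odot> e = z \<odot> e" by simp
  then have "(z + z) + (z + z) = z + z" using h by (simp add: mul_addL)
  then have "z + z = 0" by (metis add_cancel_right_right)
  then show ?thesis by (rule two_zero)
qed
lemma zRm: "z \<odot> e = - z \<Longrightarrow> z = 0"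
proof -
  assume h: "z \<odot> e = - z"
  have "(z \<odot> e) \<odot> e = z \<odot> e" by simp
  then have "z = - z" using h by (simp add: mul_negL)
  then have "z + z = 0" by (metis add.right_inverse)
  then show ?thesis by (rule two_zero)
qed

lemma pr_11_11: "p11 x \<Longrightarrow> p11 y \<Longrightarrow> p11 (x \<odot> y)"
  unfolding p11_def using eL[of x y] eR[of x y] by simp
lemma pr_11_12: "p11 x \<Longrightarrow> p12 y \<Longrightarrow> p12 (x \<odot> y)"
  unfolding p11_def p12_def using eL[of x y] eR[of x y] by simp
lemma pr_11_21: "p11 x \<Longrightarrow> p21 y \<Longrightarrow> x \<odot> y = 0"
  unfolding p11_def p21_def using eL[of x y] by (intro zL2) simp
lemma pr_11_22: "p11 x \<Longrightarrow> p22 y \<Longrightarrow> x \<odot> y = 0"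
  unfolding p11_def p22_def using eL[of x y] by (intro zL2) simp
lemma pr_12_11: "p12 x \<Longrightarrow> p11 y \<Longrightarrow> x \<odot> y = 0"
  unfolding p12_def p11_def using eR[of x y] by (intro zR2) simp
lemma pr_12_12: "p12 x \<Longrightarrow> p12 y \<Longrightarrow> p21 (x \<odot> y)"
  unfolding p12_def p21_def using eL[of x y] eR[of x y] by simp
lemma pr_12_21: "p12 x \<Longrightarrow> p21 y \<Longrightarrow> p11 (x \<odot> y)"
  unfolding p12_def p21_def p11_def using eL[of x y] eR[of x y] by simp
lemma pr_12_22: "p12 x \<Longrightarrow> p22 y \<Longrightarrow> p12 (x \<odot> y)"
  unfolding p12_def p22_def using eL[of x y] eR[of x y] by simp
lemma pr_21_11: "p21 x \<Longrightarrow> p11 y \<Longrightarrow> p21 (x \<odot> y)"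
  unfolding p21_def p11_def using eL[of x y] eR[of x y] by simp
lemma pr_21_12: "p21 x \<Longrightarrow> p12 y \<Longrightarrow> p22 (x \<odot> y)"
  unfolding p21_def p12_def p22_def using eL[of x y] eR[of x y] by simp
lemma pr_21_21: "p21 x \<Longrightarrow> p21 y \<Longrightarrow> p12 (x \<odot> y)"
  unfolding p21_def p12_def using eL[of x y] eR[of x y] by simp
lemma pr_21_22: "p21 x \<Longrightarrow> p22 y \<Longrightarrow> x \<odot> y = 0"
  unfolding p21_def p22_def using eR[of x y] by (intro zRm) simp
lemma pr_22_11: "p22 x \<Longrightarrow> p11 y \<Longrightarrow> x \<odot> y = 0"
  unfolding p22_def p11_def using eL[of x y] by (intro zLm) simp
lemma pr_22_12: "p22 x \<Longrightarrow> p12 y \<Longrightarrow> x \<odot> y = 0"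
  unfolding p22_def p12_def using eL[of x y] by (intro zLm) simp
lemma pr_22_21: "p22 x \<Longrightarrow> p21 y \<Longrightarrow> p21 (x \<odot> y)"
  unfolding p22_def p21_def using eL[of x y] eR[of x y] by simp
lemma pr_22_22: "p22 x \<Longrightarrow> p22 y \<Longrightarrow> p22 (x \<odot> y)"
  unfolding p22_def using eL[of x y] eR[of x y] by simp

lemma c_st: "c11 (st x) = st (c11 x)" "c12 (st x) = st (c21 x)"
  "c21 (st x) = st (c12 x)" "c22 (st x) = st (c22 x)"
  unfolding c11_def c12_def c21_def c22_def
  by (simp_all add: st_mul st_diff st_add e_sym exe[symmetric] del: exe)

lemma c_eL[simp]: "c11 (e \<odot> x) = c11 x" "c12 (e \<odot> x) = c12 x" "c21 (e \<odot> x) = 0" "c22 (e \<odot> x) = 0"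
  unfolding c11_def c12_def c21_def c22_def by simp_all
lemma c_eR[simp]: "c11 (x \<odot> e) = c11 x" "c12 (x \<odot> e) = 0" "c21 (x \<odot> e) = c21 x" "c22 (x \<odot> e) = 0"
  unfolding c11_def c12_def c21_def c22_def by (simp_all add: exe[symmetric] del: exe)

end


context AS begin
abbreviation jb (infixl "\<diamond>" 68) where "jb a b \<equiv> jbullet mul st a b"

lemma jb_def': "a \<diamond> b = a \<odot> b + b \<odot> st a" by (simp add: jbullet_def)
lemma jb_addL: "(a + a') \<diamond> b = a \<diamond> b + a' \<diamond> b"
  by (simp add: jbullet_def mul_addL mul_addR st_add algebra_simps)
lemma jb_addR: "a \<diamond> (b + b') = a \<diamond> b + a \<diamond> b'"
  by (simp add: jbullet_def mul_addL mul_addR algebra_simps)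
lemma jb_0L[simp]: "0 \<diamond> b = 0" by (simp add: jbullet_def)
lemma jb_0R[simp]: "a \<diamond> 0 = 0" by (simp add: jbullet_def)
lemma jb_negL: "(- a) \<diamond> b = - (a \<diamond> b)"
  by (simp add: jbullet_def mul_negL mul_negR st_neg)
lemma jb_negR: "a \<diamond> (- b) = - (a \<diamond> b)"
  by (simp add: jbullet_def mul_negL mul_negR)
lemma jb_diffL: "(a - a') \<diamond> b = a \<diamond> b - a' \<diamond> b"
  by (simp add: jbullet_def mul_diffL mul_diffR st_diff)
lemma jb_diffR: "a \<diamond> (b - b') = a \<diamond> b - a \<diamond> b'"
  by (simp add: jbullet_def mul_diffL mul_diffR)
lemma jb_scR: "a \<diamond> (sc c b) = sc c (a \<diamond> b)"
  by (simp add: jbullet_def mul_scL mul_scR sc_simps)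
lemma one_jb: "one \<diamond> b = b + b" by (simp add: jbullet_def)

lemma sc0[simp]: "sc c 0 = 0" "sc 0 x = 0" by (simp_all add: sc_simps)

lemma vs: "vector_space sc" using md module_iff_vector_space by blast
lemma sc_eq_0: "sc c x = 0 \<longleftrightarrow> c = 0 \<or> x = 0"
  using vector_space.scale_eq_0_iff[OF vs] by blast

end

locale PJ = PE +
  fixes \<Phi> :: "'a \<Rightarrow> 'a"
  assumes J2: "\<Phi> (a \<diamond> b) = \<Phi> a \<diamond> b + a \<diamond> \<Phi> b"
begin

lemma Phi0[simp]: "\<Phi> 0 = 0"
  using J2[of 0 0] by simp

definition D where "D x y = \<Phi> (x + y) - \<Phi> x - \<Phi> y"

lemma D_zero: "D x y = 0 \<Longrightarrow> \<Phi> (x + y) = \<Phi> x + \<Phi> y"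
  unfolding D_def by (metis diff_diff_eq eq_iff_diff_eq_0)

lemma D0[simp]: "D 0 y = 0" "D x 0 = 0" unfolding D_def by simp_all

lemma cPhi: "c \<diamond> \<Phi> z = \<Phi> (c \<diamond> z) - \<Phi> c \<diamond> z" using J2[of c z] by simp
lemma Phic: "\<Phi> z \<diamond> c = \<Phi> (z \<diamond> c) - z \<diamond> \<Phi> c" using J2[of z c] by simp

lemma defL: "c \<diamond> D x y = D (c \<diamond> x) (c \<diamond> y)"
  unfolding D_def by (simp add: jb_diffR cPhi jb_addR jb_addL algebra_simps)
lemma defR: "D x y \<diamond> c = D (x \<diamond> c) (y \<diamond> c)"
  unfolding D_def by (simp add: jb_diffL Phic jb_addR jb_addL algebra_simps)

lemma ef_crit: "e \<diamond> T = 0 \<Longrightarrow> (one - e) \<diamond> T = 0 \<Longrightarrow> T = 0"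
proof -
  assume a: "e \<diamond> T = 0" "(one - e) \<diamond> T = 0"
  have "T + T = one \<diamond> T" by (simp add: one_jb)
  also have "\<dots> = e \<diamond> T + (one - e) \<diamond> T" by (simp add: jb_diffL)
  finally have "T + T = 0" using a by simp
  then show ?thesis by (rule two_zero)
qed

lemma f_mul: "(one - e) \<odot> x = x - e \<odot> x" "x \<odot> (one - e) = x - x \<odot> e"
  by (simp_all add: mul_diffL mul_diffR)

lemma B1: assumes "p11 a" "p22 b" shows "\<Phi> (a + b) = \<Phi> a + \<Phi> b"
proof -
  have ea: "e \<diamond> a = a + a" "e \<diamond> b = 0" "(one - e) \<diamond> a = 0" "(one - e) \<diamond> b = b + b"
    using assms unfolding p11_def p22_def by (simp_all add: jb_def' f_mul e_sym st_diff)
  have "e \<diamond> D a b = 0" unfolding defL using ea by (simp add: D_def)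
  moreover have "(one - e) \<diamond> D a b = 0" unfolding defL using ea by (simp add: D_def)
  ultimately have "D a b = 0" by (rule ef_crit)
  then show ?thesis by (rule D_zero)
qed

abbreviation g where "g \<equiv> e + e - one"

lemma st_g: "st g = g" by (simp add: st_add st_diff e_sym)

lemma g_jb: "g \<diamond> x = (c11 x + c11 x) - (c22 x + c22 x)"
  unfolding jb_def' st_g unfolding c11_def c22_def
  by (simp add: mul_addL mul_addR mul_diffL mul_diffR algebra_simps)

lemma ig_jb: "(sc \<i> g) \<diamond> x = sc \<i> (c12 x + c12 x) - sc \<i> (c21 x + c21 x)"
  unfolding jb_def' st_sc st_g unfolding c12_def c21_def
  by (simp add: mul_addL mul_addR mul_diffL mul_diffR mul_scL mul_scR sc_simps algebra_simps)

lemma c11_g: "c11 (g \<diamond> x) = c11 x + c11 x" "c22 (g \<diamond> x) = - (c22 x + c22 x)"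
  "c12 (g \<diamond> x) = 0" "c21 (g \<diamond> x) = 0"
  unfolding g_jb by simp_all

lemma c_ig: "c12 ((sc \<i> g) \<diamond> x) = sc \<i> (c12 x + c12 x)" "c21 ((sc \<i> g) \<diamond> x) = - sc \<i> (c21 x + c21 x)"
  "c11 ((sc \<i> g) \<diamond> x) = 0" "c22 ((sc \<i> g) \<diamond> x) = 0"
  unfolding ig_jb by simp_all

lemma g_zero11: "g \<diamond> T = 0 \<Longrightarrow> c11 T = 0 \<and> c22 T = 0"
proof -
  assume h: "g \<diamond> T = 0"
  have "c11 T + c11 T = 0" using c11_g(1)[of T] h by simp
  moreover have "c22 T + c22 T = 0" using c11_g(2)[of T] h by (metis neg_equal_0_iff_equal c_zero(4))
  ultimately show ?thesis using two_zero by blast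
qed

lemma ig_zero12: "(sc \<i> g) \<diamond> T = 0 \<Longrightarrow> c12 T = 0 \<and> c21 T = 0"
proof -
  assume h: "(sc \<i> g) \<diamond> T = 0"
  have "sc \<i> (c12 T + c12 T) = 0" using c_ig(1)[of T] h by simp
  then have "c12 T + c12 T = 0" by (simp add: sc_eq_0)
  moreover have "sc \<i> (c21 T + c21 T) = 0" using c_ig(2)[of T] h by (metis neg_equal_0_iff_equal c_zero(3))
  then have "c21 T + c21 T = 0" by (simp add: sc_eq_0)
  ultimately show ?thesis using two_zero by blast
qed

lemma by_comp: "c11 T = 0 \<Longrightarrow> c12 T = 0 \<Longrightarrow> c21 T = 0 \<Longrightarrow> c22 T = 0 \<Longrightarrow> T = 0"
  using decomp[of T] by simp

lemma p12_jb_e: "p12 a \<Longrightarrow> a \<diamond> e = 0"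
  using p_st(2)[of a] unfolding jb_def' p12_def p21_def by simp
lemma p21_jb_e: "p21 b \<Longrightarrow> b \<diamond> e = b + st b"
  using p_st(3)[of b] unfolding jb_def' p12_def p21_def by simp
lemma p12_jb_f: "p12 a \<Longrightarrow> a \<diamond> (one - e) = a + st a"
  using p_st(2)[of a] unfolding jb_def' p12_def p21_def by (simp add: f_mul)
lemma p21_jb_f: "p21 b \<Longrightarrow> b \<diamond> (one - e) = 0"
  using p_st(3)[of b] unfolding jb_def' p12_def p21_def by (simp add: f_mul)
lemma g_p12: "p12 a \<Longrightarrow> g \<diamond> a = 0" unfolding g_jb by simp
lemma g_p21: "p21 a \<Longrightarrow> g \<diamond> a = 0" unfolding g_jb by simp
lemma g_p11: "p11 a \<Longrightarrow> g \<diamond> a = a + a" unfolding g_jb by simp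
lemma g_p22: "p22 a \<Longrightarrow> g \<diamond> a = - (a + a)" unfolding g_jb by simp
lemma ig_p12: "p12 a \<Longrightarrow> (sc \<i> g) \<diamond> a = sc \<i> (a + a)" unfolding ig_jb by simp
lemma ig_p21: "p21 a \<Longrightarrow> (sc \<i> g) \<diamond> a = - sc \<i> (a + a)" unfolding ig_jb by simp
lemma ig_p11: "p11 a \<Longrightarrow> (sc \<i> g) \<diamond> a = 0" unfolding ig_jb by simp
lemma ig_p22: "p22 a \<Longrightarrow> (sc \<i> g) \<diamond> a = 0" unfolding ig_jb by simp

lemma c21_Re: "c21 (T \<diamond> e) = c21 T"
  unfolding jb_def' by (simp add: c_st)
lemma c12_Rf: "c12 (T \<diamond> (one - e)) = c12 T"
  unfolding jb_def' by (simp add: c_st f_mul)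

lemma B2: assumes "p12 a" "p21 b" shows "\<Phi> (a + b) = \<Phi> a + \<Phi> b"
proof -
  have "g \<diamond> D a b = 0" unfolding defL using assms by (simp add: g_p12 g_p21)
  then have 1: "c11 (D a b) = 0 \<and> c22 (D a b) = 0" by (rule g_zero11)
  have "D a b \<diamond> e = 0" unfolding defR using assms by (simp add: p12_jb_e p21_jb_e D_def)
  then have 2: "c21 (D a b) = 0" using c21_Re[of "D a b"] by simp
  have "D a b \<diamond> (one - e) = 0" unfolding defR using assms by (simp add: p12_jb_f p21_jb_f D_def)
  then have 3: "c12 (D a b) = 0" using c12_Rf[of "D a b"] by simp
  have "D a b = 0" using 1 2 3 by_comp by blast
  then show ?thesis by (rule D_zero)
qed

end


context PJ begin

lemma Decomp: "\<Phi> x = \<Phi> (c11 x) + \<Phi> (c12 x) + \<Phi> (c21 x) + \<Phi> (c22 x)"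
proof -
  define T where "T = \<Phi> x - \<Phi> (c11 x) - \<Phi> (c12 x) - \<Phi> (c21 x) - \<Phi> (c22 x)"
  have gen: "c \<diamond> T = \<Phi> (c \<diamond> x) - \<Phi> (c \<diamond> c11 x) - \<Phi> (c \<diamond> c12 x) - \<Phi> (c \<diamond> c21 x) - \<Phi> (c \<diamond> c22 x)" for c
  proof -
    have "\<Phi> c \<diamond> (c11 x + c12 x + c21 x + c22 x) = \<Phi> c \<diamond> c11 x + \<Phi> c \<diamond> c12 x + \<Phi> c \<diamond> c21 x + \<Phi> c \<diamond> c22 x"
      by (simp add: jb_addR)
    then have h: "\<Phi> c \<diamond> x = \<Phi> c \<diamond> c11 x + \<Phi> c \<diamond> c12 x + \<Phi> c \<diamond> c21 x + \<Phi> c \<diamond> c22 x"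
      using decomp[of x] by simp
    show ?thesis unfolding T_def jb_diffR cPhi h by (simp add: algebra_simps)
  qed
  have A: "p11 (c11 x + c11 x)" by (intro p_add(1) p11_c11)
  have B: "p22 (- (c22 x + c22 x))" by (intro p_neg(4) p_add(4) p22_c22)
  have "g \<diamond> T = 0"
    unfolding gen g_jb[of x] g_p11[OF p11_c11] g_p12[OF p12_c12] g_p21[OF p21_c21] g_p22[OF p22_c22]
    using B1[OF A B] by (simp add: algebra_simps)
  then have 1: "c11 T = 0 \<and> c22 T = 0" by (rule g_zero11)
  have A2: "p12 (sc \<i> (c12 x + c12 x))" by (intro p_sc(2) p_add(2) p12_c12)
  have B2': "p21 (- sc \<i> (c21 x + c21 x))" by (intro p_neg(3) p_sc(3) p_add(3) p21_c21)
  have "(sc \<i> g) \<diamond> T = 0"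
    unfolding gen ig_jb[of x] ig_p11[OF p11_c11] ig_p12[OF p12_c12] ig_p21[OF p21_c21] ig_p22[OF p22_c22]
    using B2[OF A2 B2'] by (simp add: algebra_simps)
  then have 2: "c12 T = 0 \<and> c21 T = 0" by (rule ig_zero12)
  have "T = 0" using 1 2 by_comp by blast
  then show ?thesis unfolding T_def by (simp add: algebra_simps)
qed

lemma decomp4: assumes "p11 a" "p12 b" "p21 c" "p22 d"
  shows "\<Phi> (a + b + c + d) = \<Phi> a + \<Phi> b + \<Phi> c + \<Phi> d"
  using Decomp[of "a + b + c + d"] assms by simp

lemma Add12: assumes p: "p12 p" and q: "p12 q" shows "\<Phi> (p + q) = \<Phi> p + \<Phi> q"
proof -
  have "g \<diamond> D p q = 0" unfolding defL using assms by (simp add: g_p12)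
  then have 1: "c11 (D p q) = 0 \<and> c22 (D p q) = 0" by (rule g_zero11)
  have "D p q \<diamond> e = 0" unfolding defR using assms by (simp add: p12_jb_e)
  then have 2: "c21 (D p q) = 0" using c21_Re[of "D p q"] by simp
  have sp: "p21 (st p)" using p by (rule p_st)
  have pq: "p21 (p \<odot> q)" using p q by (rule pr_12_12)
  have qsp: "p11 (q \<odot> st p)" using q sp by (rule pr_12_21)
  have "D (st p) (p \<odot> q) \<diamond> (one - e) = 0" unfolding defR using sp pq by (simp add: p21_jb_f)
  then have 3: "c12 (D (st p) (p \<odot> q)) = 0" by (metis c12_Rf c_zero(2))
  have pe: "e \<odot> p = p" "p \<odot> e = 0" "e \<odot> q = q" "q \<odot> e = 0" using p q unfolding p12_def by auto
  have spe: "e \<odot> st p = 0" "st p \<odot> e = st p" using sp unfolding p21_def by auto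
  have id: "(e + p) \<diamond> (one - e + q) = q \<odot> st p + (p + q) + (st p + p \<odot> q) + 0"
    unfolding jb_def' by (simp add: st_add st_diff e_sym mul_addL mul_addR mul_diffL mul_diffR e_idem pe spe)
  have L: "\<Phi> ((e + p) \<diamond> (one - e + q)) = \<Phi> (q \<odot> st p) + \<Phi> (p + q) + \<Phi> (st p + p \<odot> q)"
    unfolding id using decomp4[OF qsp p_add(2)[OF p q] p_add(3)[OF sp pq] p_zero(4)] by simp
  have Ep: "\<Phi> (e + p) = \<Phi> e + \<Phi> p" using decomp4[OF p11_e p p_zero(3) p_zero(4)] by simp
  have Fq: "\<Phi> (one - e + q) = \<Phi> (one - e) + \<Phi> q"
    using decomp4[OF p_zero(1) q p_zero(3) p22_f] by (simp add: add.commute)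
  have "\<Phi> ((e + p) \<diamond> (one - e + q)) = \<Phi> (e + p) \<diamond> (one - e + q) + (e + p) \<diamond> \<Phi> (one - e + q)"
    by (rule J2)
  also have "\<dots> = (\<Phi> e \<diamond> (one - e) + e \<diamond> \<Phi> (one - e)) + (\<Phi> e \<diamond> q + e \<diamond> \<Phi> q)
     + (\<Phi> p \<diamond> (one - e) + p \<diamond> \<Phi> (one - e)) + (\<Phi> p \<diamond> q + p \<diamond> \<Phi> q)"
    unfolding Ep Fq by (simp only: jb_addL jb_addR) (simp add: algebra_simps)
  also have "\<dots> = \<Phi> (e \<diamond> (one - e)) + \<Phi> (e \<diamond> q) + \<Phi> (p \<diamond> (one - e)) + \<Phi> (p \<diamond> q)"
    by (simp add: J2)
  also have "\<dots> = \<Phi> q + (\<Phi> p + \<Phi> (st p)) + (\<Phi> (q \<odot> st p) + \<Phi> (p \<odot> q))"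
  proof -
    have a1: "e \<diamond> (one - e) = 0" unfolding jb_def' by (simp add: e_sym mul_diffL mul_diffR e_idem)
    have a2: "e \<diamond> q = q" unfolding jb_def' by (simp add: e_sym pe)
    have a3: "p \<diamond> (one - e) = 0 + p + st p + 0" unfolding jb_def' by (simp add: mul_diffL mul_diffR pe spe)
    have a4: "p \<diamond> q = q \<odot> st p + 0 + p \<odot> q + 0" unfolding jb_def' by (simp add: add.commute)
    show ?thesis unfolding a1 a2 a3 a4 decomp4[OF p_zero(1) p sp p_zero(4)] decomp4[OF qsp p_zero(2) pq p_zero(4)]
      by simp
  qed
  finally have "D p q + D (st p) (p \<odot> q) = 0" using L unfolding D_def by (simp add: algebra_simps)
  then have "c12 (D p q) = 0" using 3 by (metis add.right_neutral add_left_cancel c_add(2))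
  then have "D p q = 0" using 1 2 by_comp by blast
  then show ?thesis by (rule D_zero)
qed

lemma prime_kill:
  assumes z: "p11 z" and zc: "\<And>c. p12 c \<Longrightarrow> z \<odot> c = 0"
    and pr: "\<And>x. (\<forall>a. (x \<odot> a) \<odot> (one - e) = 0) \<Longrightarrow> x = 0"
  shows "z = 0"
proof (rule pr, rule allI)
  fix a
  have "z \<odot> a = z \<odot> (c11 a + c12 a + c21 a + c22 a)" using decomp[of a] by simp
  also have "\<dots> = z \<odot> c11 a"
    using pr_11_21[OF z p21_c21] pr_11_22[OF z p22_c22] zc[OF p12_c12] by (simp add: mul_addR)
  finally have "z \<odot> a = z \<odot> c11 a" .
  moreover have "p11 (z \<odot> c11 a)" using z p11_c11 by (rule pr_11_11)
  ultimately show "(z \<odot> a) \<odot> (one - e) = 0" unfolding p11_def by (simp add: f_mul)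
qed

lemma Add11:
  assumes pr: "\<And>x. (\<forall>a. (x \<odot> a) \<odot> (one - e) = 0) \<Longrightarrow> x = 0"
    and a: "p11 a" and b: "p11 b"
  shows "\<Phi> (a + b) = \<Phi> a + \<Phi> b"
proof -
  have fa: "(one - e) \<diamond> x = 0" if "p11 x" for x
    using that unfolding jb_def' p11_def by (simp add: st_diff e_sym f_mul)
  have "(one - e) \<diamond> D a b = 0" unfolding defL using fa[OF a] fa[OF b] by simp
  then have h: "(one - e) \<odot> D a b + D a b \<odot> (one - e) = 0" unfolding jb_def' by (simp add: st_diff e_sym)
  have "c12 (D a b) = 0" using arg_cong[OF h, of c12] by (simp add: f_mul)
  moreover have "c21 (D a b) = 0" using arg_cong[OF h, of c21] by (simp add: f_mul)
  moreover have "c22 (D a b) + c22 (D a b) = 0" using arg_cong[OF h, of c22] by (simp add: f_mul)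
  then have "c22 (D a b) = 0" by (rule two_zero)
  ultimately have "D a b = c11 (D a b)" using decomp[of "D a b"] by simp
  then have pD: "p11 (D a b)" by (metis p11_c11)
  have "D a b \<odot> c = 0" if c: "p12 c" for c
  proof -
    have sa: "c \<odot> st x = 0" if "p11 x" for x using pr_12_11[OF c p_st(1)[OF that]] .
    have "D a b \<diamond> c = D (a \<diamond> c) (b \<diamond> c)" by (rule defR)
    also have "\<dots> = D (a \<odot> c) (b \<odot> c)" unfolding jb_def' using sa[OF a] sa[OF b] by simp
    also have "\<dots> = 0" unfolding D_def using Add12[OF pr_11_12[OF a c] pr_11_12[OF b c]]
      by (simp add: mul_addL)
    finally show ?thesis unfolding jb_def' using sa[OF pD] by simp
  qed
  then have "D a b = 0" using prime_kill[OF pD _ pr] by blast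
  then show ?thesis by (rule D_zero)
qed

end

locale PJ2 = PJ +
  assumes prime1: "\<And>x. (\<forall>a. (x \<odot> a) \<odot> e = 0) \<Longrightarrow> x = 0"
    and prime2: "\<And>x. (\<forall>a. (x \<odot> a) \<odot> (one - e) = 0) \<Longrightarrow> x = 0"

sublocale PJ2 \<subseteq> F: PJ sc mul st one "one - e" \<Phi>
  by unfold_locales (simp_all add: mul_diffL mul_diffR e_idem st_diff e_sym J2)

context PJ2 begin

lemma Fp: "p21 x \<Longrightarrow> F.p12 x" "p22 x \<Longrightarrow> F.p11 x" "p12 x \<Longrightarrow> F.p21 x" "p11 x \<Longrightarrow> F.p22 x"
  unfolding p11_def p12_def p21_def p22_def F.p11_def F.p12_def F.p21_def F.p22_def
  by (simp_all add: f_mul)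

lemma Add21: "p21 x \<Longrightarrow> p21 y \<Longrightarrow> \<Phi> (x + y) = \<Phi> x + \<Phi> y"
  using F.Add12 Fp by blast

lemma Add22: "p22 x \<Longrightarrow> p22 y \<Longrightarrow> \<Phi> (x + y) = \<Phi> x + \<Phi> y"
proof -
  assume a: "p22 x" "p22 y"
  have pr: "\<And>x. (\<forall>a. (x \<odot> a) \<odot> (one - (one - e)) = 0) \<Longrightarrow> x = 0" using prime1 by simp
  show ?thesis using F.Add11[OF pr] Fp a by blast
qed

lemma additive: "\<Phi> (x + y) = \<Phi> x + \<Phi> y"
proof -
  have "\<Phi> (x + y) = \<Phi> (c11 x + c11 y) + \<Phi> (c12 x + c12 y) + \<Phi> (c21 x + c21 y) + \<Phi> (c22 x + c22 y)"
    using Decomp[of "x + y"] by simp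
  also have "\<dots> = (\<Phi> (c11 x) + \<Phi> (c12 x) + \<Phi> (c21 x) + \<Phi> (c22 x)) + (\<Phi> (c11 y) + \<Phi> (c12 y) + \<Phi> (c21 y) + \<Phi> (c22 y))"
    using Add11[OF prime2 p11_c11 p11_c11] Add12[OF p12_c12 p12_c12] Add21[OF p21_c21 p21_c21] Add22[OF p22_c22 p22_c22]
    by (simp add: algebra_simps)
  also have "\<dots> = \<Phi> x + \<Phi> y" using Decomp[of x] Decomp[of y] by simp
  finally show ?thesis .
qed

end


context PE begin

lemma c12_mulR12: assumes p: "p12 p" shows "c12 (x \<odot> p) = c11 x \<odot> p"
proof -
  have "x \<odot> p = c11 x \<odot> p + c12 x \<odot> p + c21 x \<odot> p + c22 x \<odot> p"
    by (subst decomp[of x]) (simp add: mul_addL)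
  moreover have "p12 (c11 x \<odot> p)" by (rule pr_11_12[OF p11_c11 p])
  moreover have "p21 (c12 x \<odot> p)" by (rule pr_12_12[OF p12_c12 p])
  moreover have "p22 (c21 x \<odot> p)" by (rule pr_21_12[OF p21_c21 p])
  moreover have "c22 x \<odot> p = 0" by (rule pr_22_12[OF p22_c22 p])
  ultimately show ?thesis by simp
qed

lemma c12_mulL12: assumes p: "p12 p" shows "c12 (p \<odot> y) = p \<odot> c22 y"
proof -
  have "p \<odot> y = p \<odot> c11 y + p \<odot> c12 y + p \<odot> c21 y + p \<odot> c22 y"
    by (subst decomp[of y]) (simp add: mul_addR)
  moreover have "p \<odot> c11 y = 0" by (rule pr_12_11[OF p p11_c11])
  moreover have "p21 (p \<odot> c12 y)" by (rule pr_12_12[OF p p12_c12])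
  moreover have "p11 (p \<odot> c21 y)" by (rule pr_12_21[OF p p21_c21])
  moreover have "p12 (p \<odot> c22 y)" by (rule pr_12_22[OF p p22_c22])
  ultimately show ?thesis by simp
qed

lemma c12_mulL21: assumes q: "p21 q" shows "c12 (q \<odot> y) = q \<odot> c21 y"
proof -
  have "q \<odot> y = q \<odot> c11 y + q \<odot> c12 y + q \<odot> c21 y + q \<odot> c22 y"
    by (subst decomp[of y]) (simp add: mul_addR)
  moreover have "p21 (q \<odot> c11 y)" by (rule pr_21_11[OF q p11_c11])
  moreover have "p22 (q \<odot> c12 y)" by (rule pr_21_12[OF q p12_c12])
  moreover have "p12 (q \<odot> c21 y)" by (rule pr_21_21[OF q p21_c21])
  moreover have "q \<odot> c22 y = 0" by (rule pr_21_22[OF q p22_c22])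
  ultimately show ?thesis by simp
qed

lemma comm_e: assumes "e \<odot> W = W \<odot> e" shows "c12 W = 0" "c21 W = 0"
proof -
  have "c12 W = c12 (e \<odot> W)" by simp
  also have "\<dots> = 0" using assms by simp
  finally show "c12 W = 0" .
  have "c21 W = c21 (W \<odot> e)" by simp
  also have "\<dots> = 0" using assms[symmetric] by simp
  finally show "c21 W = 0" .
qed

end

context PJ begin

context
  assumes add: "\<And>x y. \<Phi> (x + y) = \<Phi> x + \<Phi> y"
  and pr2: "\<And>x. (\<forall>a. (x \<odot> a) \<odot> (one - e) = 0) \<Longrightarrow> x = 0"
begin

lemma Phi_neg: "\<Phi> (- x) = - \<Phi> x"
proof -
  have "\<Phi> x + \<Phi> (- x) = 0" using add[of x "-x"] by simp
  then show ?thesis by (metis add_eq_0_iff)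
qed

lemma Phi_diff: "\<Phi> (x - y) = \<Phi> x - \<Phi> y"
  unfolding diff_conv_add_uminus add Phi_neg ..

lemma central0: "\<Phi> one \<diamond> y = 0"
proof -
  have "\<Phi> (one \<diamond> y) = \<Phi> one \<diamond> y + one \<diamond> \<Phi> y" by (rule J2)
  then show ?thesis by (simp add: one_jb add)
qed

lemma Zst: "st (\<Phi> one) = - \<Phi> one"
  using central0[of one] unfolding jb_def' by (simp add: add_eq_0_iff)

lemma Zc: "\<Phi> one \<odot> y = y \<odot> \<Phi> one"
  using central0[of y] unfolding jb_def' Zst by (simp add: mul_negR)

lemma X22: "c22 (\<Phi> e) = 0"
proof -
  have "\<Phi> (e \<diamond> e) = \<Phi> e \<diamond> e + e \<diamond> \<Phi> e" by (rule J2)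
  then have "\<Phi> e + \<Phi> e = \<Phi> e \<odot> e + e \<odot> st (\<Phi> e) + (e \<odot> \<Phi> e + \<Phi> e \<odot> e)"
    unfolding jb_def' by (simp add: e_sym e_idem add)
  then have "c22 (\<Phi> e + \<Phi> e) = c22 (\<Phi> e \<odot> e + e \<odot> st (\<Phi> e) + (e \<odot> \<Phi> e + \<Phi> e \<odot> e))" by simp
  then have "c22 (\<Phi> e) + c22 (\<Phi> e) = 0" by simp
  then show ?thesis by (rule two_zero)
qed

lemma X11: "c11 (\<Phi> e) = 0"
proof (rule prime_kill[OF p11_c11 _ pr2])
  fix p assume p: "p12 p"
  have ep: "e \<diamond> p = p" using p unfolding jb_def' p12_def by (simp add: e_sym)
  have "\<Phi> p = \<Phi> e \<diamond> p + e \<diamond> \<Phi> p" using J2[of e p] ep by simp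
  then have "\<Phi> p = \<Phi> e \<odot> p + p \<odot> st (\<Phi> e) + (e \<odot> \<Phi> p + \<Phi> p \<odot> e)"
    unfolding jb_def' by (simp add: e_sym)
  then have "c12 (\<Phi> p) = c12 (\<Phi> e \<odot> p + p \<odot> st (\<Phi> e) + (e \<odot> \<Phi> p + \<Phi> p \<odot> e))" by simp
  also have "\<dots> = c11 (\<Phi> e) \<odot> p + c12 (\<Phi> p)"
    using c12_mulR12[OF p] c12_mulL12[OF p] X22 by (simp add: c_st)
  finally show "c11 (\<Phi> e) \<odot> p = 0" by simp
qed

lemma Z11: "c11 (\<Phi> one) = 0"
proof -
  have "\<Phi> (e \<diamond> one) = \<Phi> e \<diamond> one + e \<diamond> \<Phi> one" by (rule J2)
  then have "\<Phi> e + \<Phi> e = \<Phi> e + st (\<Phi> e) + (e \<odot> \<Phi> one + \<Phi> one \<odot> e)"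
    unfolding jb_def' by (simp add: e_sym add)
  then have "c11 (\<Phi> e + \<Phi> e) = c11 (\<Phi> e + st (\<Phi> e) + (e \<odot> \<Phi> one + \<Phi> one \<odot> e))" by (simp only:)
  then have "c11 (\<Phi> one) + c11 (\<Phi> one) = 0" using X11 by (simp add: c_st)
  then show ?thesis by (rule two_zero)
qed

context
  assumes star: "\<And>y. \<Phi> (st y) = st (\<Phi> y)"
  and iform: "\<And>x. \<Phi> (sc \<i> x) = sc \<i> (\<Phi> x) + st x \<odot> \<Phi> (sc \<i> one)"
  and Wc: "\<And>y. \<Phi> (sc \<i> one) \<odot> y = y \<odot> \<Phi> (sc \<i> one)"
  and Wst: "st (\<Phi> (sc \<i> one)) = - \<Phi> (sc \<i> one)"
begin

lemma W11: "c11 (\<Phi> (sc \<i> one)) = 0"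
proof (rule prime_kill[OF p11_c11 _ pr2])
  fix p assume p: "p12 p"
  define W where "W = \<Phi> (sc \<i> one)"
  define X where "X = \<Phi> e"
  have cW: "c12 W = 0" "c21 W = 0" using comm_e[of W] Wc[of e] unfolding W_def by simp_all
  have stX: "st X = X" unfolding X_def using star[of e] e_sym by simp
  have ie: "\<Phi> (sc \<i> e) = sc \<i> X + e \<odot> W" unfolding X_def W_def using iform[of e] e_sym by simp
  have pe: "p \<odot> e = 0" "e \<odot> p = p" using p unfolding p12_def by auto
  have sp: "p21 (st p)" using p by (rule p_st)
  have jp: "(sc \<i> e) \<diamond> p = sc \<i> p"
    unfolding jb_def' by (simp add: st_sc e_sym mul_scL mul_scR pe)
  have "\<Phi> (sc \<i> p) = \<Phi> (sc \<i> e) \<diamond> p + (sc \<i> e) \<diamond> \<Phi> p" using J2[of "sc \<i> e" p] jp by simp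
  then have eq: "sc \<i> (\<Phi> p) + st p \<odot> W = (sc \<i> X + e \<odot> W) \<odot> p + p \<odot> (sc (- \<i>) X - W \<odot> e)
     + (sc \<i> (e \<odot> \<Phi> p) + sc (- \<i>) (\<Phi> p \<odot> e))"
    unfolding ie iform[of p] W_def[symmetric] jb_def'
    by (simp add: st_add st_sc st_mul stX e_sym Wst[folded W_def] mul_scL mul_scR mul_negR mul_negL)
  have "c12 (sc \<i> (\<Phi> p) + st p \<odot> W) = sc \<i> (c12 (\<Phi> p))"
    using c12_mulL21[OF sp, of W] cW by simp
  moreover have "c12 ((sc \<i> X + e \<odot> W) \<odot> p + p \<odot> (sc (- \<i>) X - W \<odot> e)
     + (sc \<i> (e \<odot> \<Phi> p) + sc (- \<i>) (\<Phi> p \<odot> e))) = c11 W \<odot> p + sc \<i> (c12 (\<Phi> p))"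
  proof -
    have "c11 (sc \<i> X + e \<odot> W) = c11 W" using X11 unfolding X_def by simp
    moreover have "c22 (sc \<i> (- X) - W \<odot> e) = 0" using X22 unfolding X_def by simp
    ultimately show ?thesis
      using c12_mulR12[OF p, of "sc \<i> X + e \<odot> W"] c12_mulL12[OF p, of "sc (- \<i>) X - W \<odot> e"]
      by (simp add: sc_simps)
  qed
  ultimately show "c11 W \<odot> p = 0" using arg_cong[OF eq, of c12] by simp
qed

end
end
end



context AS begin
lemma sc_cancel: "sc c x = sc c y \<longleftrightarrow> x = y \<or> c = 0"
  using vector_space.scale_cancel_left[OF vs] by blast
end

context PJ2 begin

lemma Fc11: "F.c11 x = c22 x"
  unfolding F.c11_def c22_def by (simp add: f_mul mul_diffL mul_diffR algebra_simps)

lemma pr1F: "\<And>x. (\<forall>a. (x \<odot> a) \<odot> (one - (one - e)) = 0) \<Longrightarrow> x = 0"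
  using prime1 by simp

lemma Z0: "\<Phi> one = 0"
proof -
  have 1: "c11 (\<Phi> one) = 0" by (rule Z11[OF additive prime2])
  have 2: "c22 (\<Phi> one) = 0" using F.Z11[OF additive pr1F] Fc11 by simp
  have 3: "c12 (\<Phi> one) = 0" "c21 (\<Phi> one) = 0" using comm_e Zc[OF additive prime2] by metis+
  show ?thesis using 1 2 3 by_comp by blast
qed

lemma star: "\<Phi> (st y) = st (\<Phi> y)"
proof -
  have "\<Phi> (y \<diamond> one) = \<Phi> y \<diamond> one + y \<diamond> \<Phi> one" by (rule J2)
  then have "\<Phi> (y + st y) = \<Phi> y + st (\<Phi> y)" unfolding Z0 jb_def' by simp
  then show ?thesis by (simp add: additive)
qed

abbreviation W where "W \<equiv> \<Phi> (sc \<i> one)"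

lemma Wjb: "W \<diamond> y = 0"
proof -
  have "(sc \<i> one) \<diamond> y = 0" unfolding jb_def' by (simp add: st_sc mul_scL mul_scR mul_negL mul_negR sc_simps)
  then show ?thesis using J2[of "sc \<i> one" y] by (simp add: jb_def' st_sc mul_scL mul_scR mul_negL mul_negR sc_simps)
qed

lemma Wst: "st W = - W"
  using Wjb[of one] unfolding jb_def' by (simp add: add_eq_0_iff)

lemma Wc: "W \<odot> y = y \<odot> W"
  using Wjb[of y] unfolding jb_def' Wst by (simp add: mul_negR)

lemma F1: "\<Phi> (sc \<i> (y + st y)) = sc \<i> (\<Phi> y + \<Phi> (st y)) + (y \<odot> W + st y \<odot> W)"
proof -
  have "y \<diamond> (sc \<i> one) = sc \<i> (y + st y)" unfolding jb_def' by (simp add: mul_scL mul_scR sc_simps)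
  moreover have "\<Phi> y \<diamond> (sc \<i> one) = sc \<i> (\<Phi> y + \<Phi> (st y))"
    unfolding jb_def' star by (simp add: mul_scL mul_scR sc_simps)
  moreover have "y \<diamond> W = y \<odot> W + st y \<odot> W" unfolding jb_def' Wc ..
  ultimately show ?thesis using J2[of y "sc \<i> one"] by simp
qed

lemma Phi_neg': "\<Phi> (- x) = - \<Phi> x" by (rule Phi_neg[OF additive prime2])

lemma iform: "\<Phi> (sc \<i> x) = sc \<i> (\<Phi> x) + st x \<odot> W"
proof -
  define A where "A = \<Phi> (sc \<i> x)"
  define B where "B = \<Phi> (sc \<i> (st x))"
  define U where "U = \<Phi> x"
  define V where "V = \<Phi> (st x)"
  have a: "A + B = sc \<i> U + sc \<i> V + x \<odot> W + st x \<odot> W"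
    using F1[of x] unfolding A_def B_def U_def V_def by (simp add: additive sc_simps algebra_simps)
  have ii: "sc \<i> (sc \<i> x) = - x" "sc \<i> (sc (- \<i>) x) = x" by (simp_all add: sc_simps)
  have b0: "\<Phi> (sc \<i> (sc \<i> x + st (sc \<i> x))) = sc \<i> (\<Phi> (sc \<i> x) + \<Phi> (st (sc \<i> x)))
      + (sc \<i> x \<odot> W + st (sc \<i> x) \<odot> W)" by (rule F1)
  have stix: "st (sc \<i> x) = - sc \<i> (st x)" by (simp add: st_sc sc_simps)
  have b: "- U + V = sc \<i> A - sc \<i> B + sc \<i> (x \<odot> W) - sc \<i> (st x \<odot> W)"
    using b0 unfolding stix A_def B_def U_def V_def
    by (simp add: additive Phi_neg' Phi_diff[OF additive prime2] sc_simps mul_scL mul_negL algebra_simps)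
  have b': "sc (- \<i>) (- U + V) = sc (- \<i>) (sc \<i> A - sc \<i> B + sc \<i> (x \<odot> W) - sc \<i> (st x \<odot> W))"
    using b by simp
  then have b'': "- sc (- \<i>) U + sc (- \<i>) V = A - B + x \<odot> W - st x \<odot> W"
    by (simp add: sc_simps)
  have b3: "B + (sc \<i> U + st x \<odot> W) = A + (sc \<i> V + x \<odot> W)"
    using b'' by (simp add: sc_simps algebra_simps)
  have "A + A = (A + B) + (A + (sc \<i> V + x \<odot> W)) - (B + (sc \<i> U + st x \<odot> W)) - (sc \<i> V + x \<odot> W) + (sc \<i> U + st x \<odot> W)"
    by (simp add: algebra_simps)
  also have "\<dots> = (sc \<i> U + sc \<i> V + x \<odot> W + st x \<odot> W) + (A + (sc \<i> V + x \<odot> W)) - (A + (sc \<i> V + x \<odot> W)) - (sc \<i> V + x \<odot> W) + (sc \<i> U + st x \<odot> W)"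
    unfolding a b3 ..
  also have "\<dots> = (sc \<i> U + st x \<odot> W) + (sc \<i> U + st x \<odot> W)"
    by (simp add: algebra_simps)
  finally have "(A - (sc \<i> U + st x \<odot> W)) + (A - (sc \<i> U + st x \<odot> W)) = 0"
    by (simp add: algebra_simps)
  then have "A = sc \<i> U + st x \<odot> W" using two_zero by (metis eq_iff_diff_eq_0)
  then show ?thesis unfolding A_def U_def .
qed

lemma W0: "W = 0"
proof -
  have 1: "c11 W = 0" by (rule W11[OF additive prime2 star iform Wc Wst])
  have 2: "c22 W = 0" using F.W11[OF additive pr1F star iform Wc Wst] Fc11 by simp
  have 3: "c12 W = 0" "c21 W = 0" using comm_e Wc by metis+
  show ?thesis using 1 2 3 by_comp by blast
qed

lemma ilin: "\<Phi> (sc \<i> x) = sc \<i> (\<Phi> x)"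
  using iform[of x] W0 by simp

lemma deriv: "\<Phi> (a \<odot> b) = \<Phi> a \<odot> b + a \<odot> \<Phi> b"
proof -
  have h1: "(sc \<i> a) \<diamond> b = sc \<i> (a \<odot> b - b \<odot> st a)"
    unfolding jb_def' by (simp add: st_sc mul_scL mul_scR mul_negL mul_negR sc_simps)
  have h2: "(sc \<i> (\<Phi> a)) \<diamond> b = sc \<i> (\<Phi> a \<odot> b - b \<odot> st (\<Phi> a))"
    unfolding jb_def' by (simp add: st_sc mul_scL mul_scR mul_negL mul_negR sc_simps)
  have h3: "(sc \<i> a) \<diamond> \<Phi> b = sc \<i> (a \<odot> \<Phi> b - \<Phi> b \<odot> st a)"
    unfolding jb_def' by (simp add: st_sc mul_scL mul_scR mul_negL mul_negR sc_simps)
  have "sc \<i> (\<Phi> (a \<odot> b - b \<odot> st a)) = sc \<i> (\<Phi> a \<odot> b - b \<odot> st (\<Phi> a)) + sc \<i> (a \<odot> \<Phi> b - \<Phi> b \<odot> st a)"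
    using J2[of "sc \<i> a" b] by (simp only: h1 h2 h3 ilin)
  then have "sc \<i> (\<Phi> (a \<odot> b - b \<odot> st a)) = sc \<i> ((\<Phi> a \<odot> b - b \<odot> st (\<Phi> a)) + (a \<odot> \<Phi> b - \<Phi> b \<odot> st a))"
    by (simp only: module.scale_right_distrib[OF md])
  then have m: "\<Phi> (a \<odot> b) - \<Phi> (b \<odot> st a) = \<Phi> a \<odot> b - b \<odot> st (\<Phi> a) + (a \<odot> \<Phi> b - \<Phi> b \<odot> st a)"
    by (simp add: sc_cancel Phi_diff[OF additive prime2])
  have p: "\<Phi> (a \<odot> b) + \<Phi> (b \<odot> st a) = \<Phi> a \<odot> b + b \<odot> st (\<Phi> a) + (a \<odot> \<Phi> b + \<Phi> b \<odot> st a)"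
    using J2[of a b] unfolding jb_def' star by (simp add: additive)
  have s: "(\<Phi> (a \<odot> b) - \<Phi> (b \<odot> st a)) + (\<Phi> (a \<odot> b) + \<Phi> (b \<odot> st a)) =
    (\<Phi> a \<odot> b - b \<odot> st (\<Phi> a) + (a \<odot> \<Phi> b - \<Phi> b \<odot> st a)) + (\<Phi> a \<odot> b + b \<odot> st (\<Phi> a) + (a \<odot> \<Phi> b + \<Phi> b \<odot> st a))"
    by (simp only: m p)
  have "(\<Phi> (a \<odot> b) - (\<Phi> a \<odot> b + a \<odot> \<Phi> b)) + (\<Phi> (a \<odot> b) - (\<Phi> a \<odot> b + a \<odot> \<Phi> b)) =
     ((\<Phi> (a \<odot> b) - \<Phi> (b \<odot> st a)) + (\<Phi> (a \<odot> b) + \<Phi> (b \<odot> st a))) -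
     ((\<Phi> a \<odot> b - b \<odot> st (\<Phi> a) + (a \<odot> \<Phi> b - \<Phi> b \<odot> st a)) + (\<Phi> a \<odot> b + b \<odot> st (\<Phi> a) + (a \<odot> \<Phi> b + \<Phi> b \<odot> st a)))"
    by (simp add: algebra_simps)
  also have "\<dots> = 0" unfolding s by simp
  finally have "(\<Phi> (a \<odot> b) - (\<Phi> a \<odot> b + a \<odot> \<Phi> b)) + (\<Phi> (a \<odot> b) - (\<Phi> a \<odot> b + a \<odot> \<Phi> b)) = 0" .
  then show ?thesis using two_zero by (metis eq_iff_diff_eq_0)
qed

lemma main_dir: "additive_star_derivation mul st \<Phi>"
  unfolding additive_star_derivation_def using additive deriv star by blast

end


context AS begin

abbreviation u where "u \<equiv> sc (1/2) one"

lemma half_half: "sc (1/2) y + sc (1/2) y = y"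
proof -
  have "sc (1/2) y + sc (1/2) y = sc (1/2 + 1/2) y"
    by (simp only: module.scale_left_distrib[OF md])
  then show ?thesis by (simp add: sc_simps)
qed

lemma st_u: "st u = u" by (simp add: st_sc)

lemma u_jb[simp]: "u \<diamond> y = y"
  unfolding jb_def' st_u by (simp add: mul_scL mul_scR half_half)

lemma jb_u: "y \<diamond> u = sc (1/2) (y + st y)"
  unfolding jb_def' st_u by (simp add: mul_scL mul_scR sc_simps)

lemma jb_u_u: "(y \<diamond> u) \<diamond> u = y \<diamond> u"
proof -
  have "st (y \<diamond> u) = y \<diamond> u" unfolding jb_u by (simp add: st_sc st_add add.commute)
  then show ?thesis unfolding jb_u[of "y \<diamond> u"] by (simp add: module.scale_right_distrib[OF md] half_half)
qed

lemma foldl_u: "foldl (\<diamond>) u (replicate k u) = u"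
  by (induction k) auto

lemma foldl_0: "foldl (\<diamond>) 0 zs = 0"
  by (induction zs) auto

lemma jprod_rep: "jprod mul st (replicate k u @ v # zs) = foldl (\<diamond>) v zs"
proof (cases k)
  case 0 then show ?thesis by (simp add: jprod_def)
next
  case (Suc k')
  have "jprod mul st (replicate k u @ v # zs) = foldl (\<diamond>) (foldl (\<diamond>) u (replicate k' u)) (v # zs)"
    using Suc by (simp add: jprod_def)
  then show ?thesis by (simp add: foldl_u)
qed

lemma foldl_d: "foldl (\<diamond>) d (replicate j u) = (if j = 0 then d else d \<diamond> u)"
proof (induction j)
  case 0 then show ?case by simp
next
  case (Suc j)
  have "replicate (Suc j) u = replicate j u @ [u]" by (simp add: replicate_append_same)
  then have "foldl (\<diamond>) d (replicate (Suc j) u) = foldl (\<diamond>) d (replicate j u) \<diamond> u" by simp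
  then show ?case using Suc by (simp add: jb_u_u)
qed

lemma rep_upd: "k < n \<Longrightarrow> (replicate n x)[k := v] = replicate k x @ v # replicate (n - Suc k) x"
proof (induction n arbitrary: k)
  case 0 then show ?case by simp
next
  case (Suc n) then show ?case by (cases k) auto
qed

lemma reduce:
  assumes n: "2 \<le> n" and J: "star_jordan_n_derivation mul st n \<Phi>"
  shows "\<Phi> (a \<diamond> b) = \<Phi> a \<diamond> b + a \<diamond> \<Phi> b"
proof -
  have JJ: "\<And>as. length as = n \<Longrightarrow> \<Phi> (jprod mul st as) = (\<Sum>k<n. jprod mul st (as[k := \<Phi> (as ! k)]))"
    using J unfolding star_jordan_n_derivation_def by blast
  obtain m where m: "n = Suc (Suc m)" using n by (metis add_2_eq_Suc le_Suc_ex)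
  define d where "d = \<Phi> u"
  define h where "h = d \<diamond> u"
  have e1: "\<Phi> (jprod mul st (replicate n u)) = (\<Sum>k<n. jprod mul st ((replicate n u)[k := d]))"
    using JJ[of "replicate n u"] by (simp add: d_def)
  have e0: "jprod mul st (replicate n u) = u"
  proof -
    have "replicate n u = replicate (Suc m) u @ [u]" using m by (simp add: replicate_append_same)
    then show ?thesis using jprod_rep[of "Suc m" u "[]"] by simp
  qed
  have e2: "jprod mul st ((replicate n u)[k := d]) = (if k = Suc m then d else h)" if "k < n" for k
    using that m by (simp only: rep_upd) (simp add: jprod_rep foldl_d h_def)
  have "d = (\<Sum>k<n. jprod mul st ((replicate n u)[k := d]))" using e1 e0 d_def by simp
  also have "\<dots> = (\<Sum>k<n. if k = Suc m then d else h)" by (rule sum.cong) (simp_all add: e2)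
  also have "\<dots> = (\<Sum>k<Suc m. h) + d" unfolding m by simp
  finally have "sc (of_nat (Suc m)) h = 0"
    by (simp add: module.sum_constant_scale[OF md])
  then have h0: "h = 0" by (simp add: sc_eq_0 del: of_nat_Suc)
  have da: "d \<diamond> x = 0" for x
  proof -
    let ?as = "replicate (Suc m) u @ [x]"
    have len: "length ?as = n" using m by simp
    have "\<Phi> (jprod mul st ?as) = (\<Sum>k<n. jprod mul st (?as[k := \<Phi> (?as ! k)]))" using JJ[OF len] .
    moreover have "jprod mul st ?as = x" using jprod_rep[of "Suc m" x "[]"] by simp
    moreover have "jprod mul st (?as[k := \<Phi> (?as ! k)]) = (if k = m then d \<diamond> x else 0)" if "k < Suc m" for k
    proof -
      have "?as[k := \<Phi> (?as ! k)] = (replicate (Suc m) u)[k := d] @ [x]"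
        using that by (simp add: list_update_append1 nth_append d_def del: replicate_Suc)
      also have "\<dots> = replicate k u @ d # (replicate (m - k) u @ [x])"
        using that by (simp add: rep_upd del: replicate_Suc)
      finally have "?as[k := \<Phi> (?as ! k)] = replicate k u @ d # (replicate (m - k) u @ [x])" .
      then show ?thesis using that h0 by (simp add: jprod_rep foldl_d h_def[symmetric])
    qed
    moreover have "jprod mul st (?as[Suc m := \<Phi> (?as ! Suc m)]) = \<Phi> x"
      using jprod_rep[of "Suc m" "\<Phi> x" "[]"] by (simp add: list_update_append nth_append del: replicate_Suc)
    ultimately have "x \<diamond> 0 + \<Phi> x = (\<Sum>k<Suc m. if k = m then d \<diamond> x else 0) + \<Phi> x" unfolding m by simp
    then show ?thesis by simp
  qed
  let ?as = "replicate m u @ [a, b]"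
  have len: "length ?as = n" using m by simp
  have "\<Phi> (jprod mul st ?as) = (\<Sum>k<n. jprod mul st (?as[k := \<Phi> (?as ! k)]))" using JJ[OF len] .
  moreover have "jprod mul st ?as = a \<diamond> b" using jprod_rep[of m a "[b]"] by simp
  moreover have "jprod mul st (?as[k := \<Phi> (?as ! k)]) = 0" if "k < m" for k
  proof -
    have "?as[k := \<Phi> (?as ! k)] = (replicate m u)[k := d] @ [a, b]"
      using that by (simp add: list_update_append1 nth_append d_def del: replicate_Suc)
    also have "\<dots> = replicate k u @ d # (replicate (m - Suc k) u @ [a, b])"
      using that by (simp add: rep_upd del: replicate_Suc)
    finally have "?as[k := \<Phi> (?as ! k)] = replicate k u @ d # (replicate (m - Suc k) u @ [a, b])" .
    then show ?thesis using that h0 da by (simp add: jprod_rep foldl_d h_def[symmetric])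
  qed
  moreover have "jprod mul st (?as[m := \<Phi> (?as ! m)]) = \<Phi> a \<diamond> b"
    using jprod_rep[of m "\<Phi> a" "[b]"] by (simp add: list_update_append nth_append del: replicate_Suc)
  moreover have "jprod mul st (?as[Suc m := \<Phi> (?as ! Suc m)]) = a \<diamond> \<Phi> b"
    using jprod_rep[of m a "[\<Phi> b]"] by (simp add: list_update_append nth_append del: replicate_Suc)
  ultimately show ?thesis unfolding m by simp
qed

lemma converse:
  assumes D: "additive_star_derivation mul st \<Phi>"
  shows "star_jordan_n_derivation mul st 2 \<Phi>"
  unfolding star_jordan_n_derivation_def
proof (intro allI impI)
  fix as :: "'a list" assume "length as = 2"
  then obtain a b where ab: "as = [a, b]"
    by (metis One_nat_def Suc_1 length_0_conv length_Suc_conv)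
  have add: "\<Phi> (x + y) = \<Phi> x + \<Phi> y" and der: "\<Phi> (x \<odot> y) = \<Phi> x \<odot> y + x \<odot> \<Phi> y"
    and st: "\<Phi> (st x) = st (\<Phi> x)" for x y
    using D unfolding additive_star_derivation_def by blast+
  have "\<Phi> (a \<diamond> b) = \<Phi> a \<diamond> b + a \<diamond> \<Phi> b"
    unfolding jb_def' by (simp add: add der st algebra_simps)
  then show "\<Phi> (jprod mul st as) = (\<Sum>k<2. jprod mul st (as[k := \<Phi> (as ! k)]))"
    unfolding ab by (simp add: jprod_def numeral_2_eq_2)
qed

end

theorem corollary1:
  fixes sc :: "complex \<Rightarrow> 'a::ab_group_add \<Rightarrow> 'a"
    and mul :: "'a \<Rightarrow> 'a \<Rightarrow> 'a" and st :: "'a \<Rightarrow> 'a"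
    and one e :: 'a and \<Phi> :: "'a \<Rightarrow> 'a"
  assumes "unital_alt_star_algebra sc mul st one"
    and "mul e e = e" and "st e = e" and "e \<noteq> 0" and "e \<noteq> one"
    and "\<And>x. (\<forall>a. mul (mul x a) e = 0) \<Longrightarrow> x = 0"
    and "\<And>x. (\<forall>a. mul (mul x a) (one - e) = 0) \<Longrightarrow> x = 0"
  shows "star_jordan_type_derivation mul st \<Phi> \<longleftrightarrow> additive_star_derivation mul st \<Phi>"
proof -
  interpret AS sc mul st one using assms(1) by (rule AS.intro)
  show ?thesis
  proof
    assume "star_jordan_type_derivation mul st \<Phi>"
    then obtain n where n: "2 \<le> n" "star_jordan_n_derivation mul st n \<Phi>"
      unfolding star_jordan_type_derivation_def by blast
    have J2: "\<And>a b. \<Phi> (jbullet mul st a b) = jbullet mul st (\<Phi> a) b + jbullet mul st a (\<Phi> b)"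
      using reduce[OF n] by blast
    interpret PJ2 sc mul st one e \<Phi>
      using assms(2,3,6,7) J2 by unfold_locales blast+
    show "additive_star_derivation mul st \<Phi>" by (rule main_dir)
  next
    assume "additive_star_derivation mul st \<Phi>"
    then have "star_jordan_n_derivation mul st 2 \<Phi>" by (rule converse)
    then show "star_jordan_type_derivation mul st \<Phi>"
      unfolding star_jordan_type_derivation_def by auto
  qed
qed

end
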